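(* Let $W_0\in\mathcal{W}$ and let $W(t)$ be the solution of the assignment flow $\dot W=\Pi_W\big(S(W)\big)$ with initial value $W(0)=W_0$. Then $W(t)$ admits the representation $$W(t)=\exp_{W_0}\big(V(t)\big),$$ where $V(t)\in\mathcal{T}_0$ solves $$\dot V=\Pi_{\mathcal{T}_0}\,S\big(\exp_{W_0}(V)\big),\qquad V(0)=0 .$$
   Context: Let $G=(I,E)$ be a finite undirected graph with neighborhoods $\mathcal{N}_i=\{k\in I: ik\in E\}$, and weights $w_{ik}>0$ with $\sum_{k\in\mathcal{N}_i}w_{ik}=1$ for all $i\in I$. Let $J$ be a finite label set. All operations on vectors (products, quotients, $\log$, $e^{(\cdot)}$) are componentwise. Simplex and tangent space: $\mathcal{S}=\{p\in\mathbb{R}^{|J|}: p_j>0,\ \langle\mathbb{1},p\rangle=1\}$ and $T_0=\{v\in\mathbb{R}^{|J|}:\langle\mathbb{1},v\rangle=0\}$. Write $\mathbb{1}_{\mathcal{S}}=\frac{1}{|J|}\mathbb{1}$. Define $\Pi_{T_0}(z)=z-\langle\mathbb{1}_{\mathcal{S}},z\rangle\mathbb{1}$, and for $p\in\mathcal{S}$, $\Pi_p(z)=(\mathrm{Diag}(p)-pp^\top)z$. Define $\exp_p:\mathbb{R}^{|J|}\to\mathcal{S}$, $\exp_p(z)=\frac{p\,e^{z}}{\langle p,e^{z}\rangle}$. Assignment manifold $\mathcal{W}=\mathcal{S}^{|I|}$ with points $W=(W_i)_{i\in I}$, $W_i\in\mathcal{S}$; $\mathcal{T}_0=T_0^{|I|}$.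 The maps $\Pi_{\mathcal{T}_0}$, $\Pi_W$, $\exp_W$ act blockwise: $(\Pi_{\mathcal{T}_0}Z)_i=\Pi_{T_0}Z_i$, $(\Pi_W Z)_i=\Pi_{W_i}Z_i$, $(\exp_W Z)_i=\exp_{W_i}(Z_i)$ for $Z=(Z_i)_{i\in I}\in\mathbb{R}^{|I||J|}$. Given distance vectors $D_i\in\mathbb{R}^{|J|}$ ($i\in I$) and $\rho>0$, the likelihood vectors are $L_i(W_i)=\frac{W_i e^{-D_i/\rho}}{\langle W_i,e^{-D_i/\rho}\rangle}$. For $W\in\mathcal{W}$ the geometric mean is $\mathcal{G}^w_i(W)=\exp_{W_i}\Big(\log\frac{\prod_{k\in\mathcal{N}_i}W_k^{w_{ik}}}{W_i}\Big)$, and the similarity vectors are $S_i(W)=\mathcal{G}^w_i\big(L(W)\big)$ with $L(W)=(L_i(W_i))_{i\in I}$; $S(W)=(S_i(W))_{i\in I}\in\mathcal{W}$. *)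

theory Defs
  imports "HOL-Analysis.Analysis"
begin

text \<open>Vectors over the label set J are modelled as real^'j, points of the assignment
manifold (and elements of R^{|I||J|}) as real^'j^'i, with W$i the block W_i.\<close>

definition simplexS :: "real^'j \<Rightarrow> bool" where
  "simplexS p \<longleftrightarrow> (\<forall>j. p$j > 0) \<and> (\<Sum>j\<in>UNIV. p$j) = 1"

definition tangentT0 :: "real^'j \<Rightarrow> bool" where
  "tangentT0 v \<longleftrightarrow> (\<Sum>j\<in>UNIV. v$j) = 0"

definition PiT0 :: "real^'j \<Rightarrow> real^'j" where
  "PiT0 z = (\<chi> j. z$j - (\<Sum>k\<in>UNIV. z$k / real CARD('j)))"

definition Pip :: "real^'j \<Rightarrow> real^'j \<Rightarrow> real^'j" where
  "Pip p z = (\<chi> j. p$j * z$j - p$j * (\<Sum>k\<in>UNIV. p$k * z$k))"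

definition expS :: "real^'j \<Rightarrow> real^'j \<Rightarrow> real^'j" where
  "expS p z = (\<chi> j. p$j * exp (z$j) / (\<Sum>k\<in>UNIV. p$k * exp (z$k)))"

definition assignW :: "real^'j^'i \<Rightarrow> bool" where
  "assignW W \<longleftrightarrow> (\<forall>i. simplexS (W$i))"

definition tangentTT0 :: "real^'j^'i \<Rightarrow> bool" where
  "tangentTT0 V \<longleftrightarrow> (\<forall>i. tangentT0 (V$i))"

definition PiTT0 :: "real^'j^'i \<Rightarrow> real^'j^'i" where
  "PiTT0 Z = (\<chi> i. PiT0 (Z$i))"

definition PiW :: "real^'j^'i \<Rightarrow> real^'j^'i \<Rightarrow> real^'j^'i" where
  "PiW W Z = (\<chi> i. Pip (W$i) (Z$i))"

definition expW :: "real^'j^'i \<Rightarrow> real^'j^'i \<Rightarrow> real^'j^'i" where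
  "expW W Z = (\<chi> i. expS (W$i) (Z$i))"

definition likelihood :: "real^'j^'i \<Rightarrow> real \<Rightarrow> real^'j^'i \<Rightarrow> real^'j^'i" where
  "likelihood D \<rho> W = (\<chi> i. (\<chi> j. W$i$j * exp (- D$i$j / \<rho>)
       / (\<Sum>k\<in>UNIV. W$i$k * exp (- D$i$k / \<rho>))))"

definition geomean :: "('i \<Rightarrow> 'i set) \<Rightarrow> ('i \<Rightarrow> 'i \<Rightarrow> real) \<Rightarrow> real^'j^'i \<Rightarrow> 'i \<Rightarrow> real^'j" where
  "geomean N w W i = expS (W$i)
      (\<chi> j. ln ((\<Prod>k\<in>N i. (W$k$j) powr (w i k)) / W$i$j))"

definition similarity :: "('i \<Rightarrow> 'i set) \<Rightarrow> ('i \<Rightarrow> 'i \<Rightarrow> real) \<Rightarrow> real^'j^'i \<Rightarrow> real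
     \<Rightarrow> real^'j^'i \<Rightarrow> real^'j^'i" where
  "similarity N w D \<rho> W = (\<chi> i. geomean N w (likelihood D \<rho> W) i)"

end

theory Submission
  imports Defs
begin

lemma vec_lambda_has_vector_derivative:
  fixes f :: "'n::finite \<Rightarrow> real \<Rightarrow> 'a::real_normed_vector"
  assumes "\<And>i. (f i has_vector_derivative f' i) F"
  shows "((\<lambda>t. \<chi> i. f i t) has_vector_derivative (\<chi> i. f' i)) F"
proof -
  have bl: "bounded_linear (\<lambda>h. h *\<^sub>R (\<chi> i. f' i))"
    by (rule bounded_linear_scaleR_left)
  have lim: "\<And>i. ((\<lambda>y. ((f i y - f i (netlimit F)) - (y - netlimit F) *\<^sub>R f' i) /\<^sub>R norm (y - netlimit F)) \<longlongrightarrow> 0) F"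
    using assms unfolding has_vector_derivative_def has_derivative_def by blast
  have "((\<lambda>y. \<chi> i. ((f i y - f i (netlimit F)) - (y - netlimit F) *\<^sub>R f' i) /\<^sub>R norm (y - netlimit F)) \<longlongrightarrow> (\<chi> i. 0)) F"
    by (rule tendsto_vec_lambda) (rule lim)
  moreover have "(\<lambda>y. \<chi> i. ((f i y - f i (netlimit F)) - (y - netlimit F) *\<^sub>R f' i) /\<^sub>R norm (y - netlimit F))
     = (\<lambda>y. (((\<chi> i. f i y) - (\<chi> i. f i (netlimit F))) - (y - netlimit F) *\<^sub>R (\<chi> i. f' i)) /\<^sub>R norm (y - netlimit F))"
    by (auto simp: vec_eq_iff)
  moreover have "(\<chi> i. 0) = (0::'a^'n)" by (simp add: vec_eq_iff)
  ultimately show ?thesis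
    unfolding has_vector_derivative_def has_derivative_def using bl by simp
qed

lemma nth_has_vector_derivative:
  fixes W :: "real \<Rightarrow> real^'j::finite^'i::finite"
  assumes "(W has_vector_derivative W') F"
  shows "((\<lambda>t. W t $ i $ j) has_vector_derivative W' $ i $ j) F"
proof -
  have bl: "bounded_linear (\<lambda>x::real^'j^'i. x $ i $ j)"
    using bounded_linear_compose[OF bounded_linear_vec_nth[of j] bounded_linear_vec_nth[of i]] by (simp add: o_def)
  show ?thesis using bounded_linear.has_vector_derivative[OF bl assms] by simp
qed

theorem proposition3p1:
  fixes N :: "'i::finite \<Rightarrow> 'i set"
    and w :: "'i \<Rightarrow> 'i \<Rightarrow> real"
    and D :: "real^'j::finite^'i"
    and \<rho> :: real
    and W0 :: "real^'j^'i"
    and W :: "real \<Rightarrow> real^'j^'i"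
    and T :: "real set"
  assumes N_sym: "\<And>i k. k \<in> N i \<longleftrightarrow> i \<in> N k"
    and w_pos: "\<And>i k. k \<in> N i \<Longrightarrow> w i k > 0"
    and w_sum: "\<And>i. (\<Sum>k\<in>N i. w i k) = 1"
    and rho_pos: "\<rho> > 0"
    and W0: "assignW W0"
    and T_int: "is_interval T" and T0: "0 \<in> T"
    and W_init: "W 0 = W0"
    and W_in: "\<And>t. t \<in> T \<Longrightarrow> assignW (W t)"
    and W_flow: "\<And>t. t \<in> T \<Longrightarrow>
        (W has_vector_derivative PiW (W t) (similarity N w D \<rho> (W t))) (at t within T)"
  shows "\<exists>V :: real \<Rightarrow> real^'j^'i. V 0 = 0 \<and>
          (\<forall>t\<in>T. tangentTT0 (V t)
             \<and> (V has_vector_derivative PiTT0 (similarity N w D \<rho> (expW W0 (V t)))) (at t within T)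
             \<and> W t = expW W0 (V t))"
proof -
  let ?S = "\<lambda>t. similarity N w D \<rho> (W t)"
  define lw where "lw i j t = ln (W t $ i $ j) - ln (W0 $ i $ j)" for i j t
  define c where "c i t = (\<Sum>k\<in>UNIV. lw i k t) / real CARD('j)" for i t
  define V where "V t = (\<chi> i. \<chi> j. lw i j t - c i t)" for t
  have cardpos: "real CARD('j) > 0" by simp
  have Wpos: "W t $ i $ j > 0" if "t \<in> T" for t i j
    using W_in[OF that] unfolding assignW_def simplexS_def by blast
  have Wsum: "(\<Sum>k\<in>UNIV. W t $ i $ k) = 1" if "t \<in> T" for t i
    using W_in[OF that] unfolding assignW_def simplexS_def by blast
  have W0pos: "W0 $ i $ j > 0" for i j
    using W0 unfolding assignW_def simplexS_def by blast
  have V0: "V 0 = 0"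
    unfolding V_def c_def lw_def W_init by (simp add: vec_eq_iff)
  have Vnth: "V t $ i $ j = lw i j t - c i t" for t i j
    unfolding V_def by simp
  have rep: "W t = expW W0 (V t)" if tT: "t \<in> T" for t
  proof -
    have "expW W0 (V t) $ i $ j = W t $ i $ j" for i j
    proof -
      have e: "W0 $ i $ k * exp (V t $ i $ k) = W t $ i $ k * exp (- c i t)" for k
        using Wpos[OF tT, of i k] W0pos[of i k]
        by (simp add: Vnth lw_def exp_diff exp_minus exp_add field_simps)
      have "(\<Sum>k\<in>UNIV. W0 $ i $ k * exp (V t $ i $ k)) = exp (- c i t)"
        unfolding e by (simp add: Wsum[OF tT] flip: sum_distrib_right)
      then show ?thesis
        unfolding expW_def expS_def by (simp add: e)
    qed
    then show ?thesis by (simp add: vec_eq_iff)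
  qed
  have tang: "tangentTT0 (V t)" for t
  proof -
    have "(\<Sum>j\<in>UNIV. V t $ i $ j) = 0" for i
      using cardpos by (simp add: Vnth sum_subtractf c_def)
    then show ?thesis unfolding tangentTT0_def tangentT0_def by simp
  qed
  have dlw: "((\<lambda>t. lw i j t) has_vector_derivative
       (?S t $ i $ j - (\<Sum>k\<in>UNIV. W t $ i $ k * ?S t $ i $ k))) (at t within T)"
    if tT: "t \<in> T" for i j t
  proof -
    have d1: "((\<lambda>t. W t $ i $ j) has_real_derivative
        (W t $ i $ j * ?S t $ i $ j - W t $ i $ j * (\<Sum>k\<in>UNIV. W t $ i $ k * ?S t $ i $ k))) (at t within T)"
      using nth_has_vector_derivative[OF W_flow[OF tT], of i j]
      unfolding has_real_derivative_iff_has_vector_derivative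
      by (simp add: PiW_def Pip_def)
    have "((\<lambda>t. ln (W t $ i $ j) - ln (W0 $ i $ j)) has_real_derivative
        (W t $ i $ j * ?S t $ i $ j - W t $ i $ j * (\<Sum>k\<in>UNIV. W t $ i $ k * ?S t $ i $ k)) / W t $ i $ j)
        (at t within T)"
      by (rule derivative_eq_intros d1 refl | use Wpos[OF tT, of i j] in simp)+
    moreover have "(W t $ i $ j * ?S t $ i $ j - W t $ i $ j * (\<Sum>k\<in>UNIV. W t $ i $ k * ?S t $ i $ k)) / W t $ i $ j
       = ?S t $ i $ j - (\<Sum>k\<in>UNIV. W t $ i $ k * ?S t $ i $ k)"
      using Wpos[OF tT, of i j] by (simp add: field_simps)
    ultimately show ?thesis
      unfolding lw_def has_real_derivative_iff_has_vector_derivative[symmetric] by simp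
  qed
  have dV: "(V has_vector_derivative PiTT0 (?S t)) (at t within T)" if tT: "t \<in> T" for t
  proof -
    let ?m = "\<lambda>i. (\<Sum>k\<in>UNIV. W t $ i $ k * ?S t $ i $ k)"
    have "((\<lambda>t. lw i j t - c i t) has_vector_derivative
        ((?S t $ i $ j - ?m i) - (\<Sum>k\<in>UNIV. ?S t $ i $ k - ?m i) / real CARD('j))) (at t within T)"
      for i j
      unfolding c_def
      by (intro has_vector_derivative_diff dlw[OF tT] has_vector_derivative_divide
                has_vector_derivative_sum)
    moreover have "(?S t $ i $ j - ?m i) - (\<Sum>k\<in>UNIV. ?S t $ i $ k - ?m i) / real CARD('j)
        = PiTT0 (?S t) $ i $ j" for i j
      using cardpos by (simp add: PiTT0_def PiT0_def sum_subtractf field_simps sum_divide_distrib)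
    ultimately have "((\<lambda>t. lw i j t - c i t) has_vector_derivative PiTT0 (?S t) $ i $ j) (at t within T)"
      for i j by simp
    then have "((\<lambda>t. \<chi> i. \<chi> j. lw i j t - c i t) has_vector_derivative (\<chi> i. \<chi> j. PiTT0 (?S t) $ i $ j)) (at t within T)"
      by (intro vec_lambda_has_vector_derivative)
    then show ?thesis unfolding V_def[abs_def] by simp
  qed
  show ?thesis
  proof (intro exI[of _ V] conjI ballI V0 tang)
    fix t assume tT: "t \<in> T"
    show "W t = expW W0 (V t)" by (rule rep[OF tT])
    show "(V has_vector_derivative PiTT0 (similarity N w D \<rho> (expW W0 (V t)))) (at t within T)"
      using dV[OF tT] rep[OF tT] by simp
  qed
qed

end
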